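(* Let $q$ be a prime power and $v,r\ge 1$ integers. If the generalized cylinder conjecture is true for $(v+1,r+1,q)$, then it is true for $(v,r,q)$.
   Context: $\mathrm{PG}(v-1,q)$ is the projective space of $\mathbb{F}_q^v$; a $k$-space is a $k$-dimensional subspace of $\mathbb{F}_q^v$ (points are $1$-spaces, hyperplanes $(v-1)$-spaces). A set $\mathcal{S}$ of points is spanning if its points span $\mathbb{F}_q^v$, and it is $q^r$-divisible if $|\mathcal{S}\cap H|\equiv|\mathcal{S}|\pmod{q^r}$ for every hyperplane $H$. An $(r+1)$-cylinder is a multiset of $q^{r+1}$ points which arises as the union (counted with multiplicity) of the point sets $L_1\setminus F,\dots,L_q\setminus F$, where $L_1,\dots,L_q$ are $(r+1)$-spaces and $F$ is an $r$-space contained in every $L_i$ ($L_i\setminus F$ denotes the set of points of $L_i$ not in $F$). The generalized cylinder conjecture is said to be true for the triple $(v,r,q)$ if every $q^r$-divisible spanning set of $q^{r+1}$ points in $\mathrm{PG}(v-1,q)$ is an $(r+1)$-cylinder. *)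

theory Defs
  imports Main "HOL-Library.Multiset"
begin

text \<open>Vectors of F^v are modelled as functions nat => F vanishing outside {..<v}.\<close>

definition vecs :: "nat \<Rightarrow> (nat \<Rightarrow> 'a::field) set" where
  "vecs v = {x. \<forall>i\<ge>v. x i = 0}"

definition lincomb :: "((nat \<Rightarrow> 'a::field) \<Rightarrow> 'a) \<Rightarrow> (nat \<Rightarrow> 'a) set \<Rightarrow> (nat \<Rightarrow> 'a)" where
  "lincomb c B = (\<lambda>i. \<Sum>x\<in>B. c x * x i)"

definition lspan :: "(nat \<Rightarrow> 'a::field) set \<Rightarrow> (nat \<Rightarrow> 'a) set" where
  "lspan A = {y. \<exists>B c. finite B \<and> B \<subseteq> A \<and> y = lincomb c B}"

definition lin_indep :: "(nat \<Rightarrow> 'a::field) set \<Rightarrow> bool" where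
  "lin_indep B \<longleftrightarrow> (\<forall>c. lincomb c B = (\<lambda>i. 0) \<longrightarrow> (\<forall>x\<in>B. c x = 0))"

definition kspace :: "nat \<Rightarrow> nat \<Rightarrow> (nat \<Rightarrow> 'a::field) set \<Rightarrow> bool" where
  "kspace v k U \<longleftrightarrow> (\<exists>B. finite B \<and> card B = k \<and> B \<subseteq> vecs v \<and> lin_indep B \<and> U = lspan B)"

definition points :: "nat \<Rightarrow> (nat \<Rightarrow> 'a::field) set set" where
  "points v = {P. kspace v 1 P}"

definition spanning :: "nat \<Rightarrow> (nat \<Rightarrow> 'a::field) set set \<Rightarrow> bool" where
  "spanning v S \<longleftrightarrow> lspan (\<Union>S) = vecs v"

definition divisible :: "nat \<Rightarrow> nat \<Rightarrow> (nat \<Rightarrow> 'a::{field,finite}) set set \<Rightarrow> bool" where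
  "divisible v r S \<longleftrightarrow> (\<forall>H. kspace v (v - 1) H \<longrightarrow>
      card {P\<in>S. P \<subseteq> H} mod (card (UNIV :: 'a set) ^ r) = card S mod (card (UNIV :: 'a set) ^ r))"

text \<open>(r+1)-cylinder: a multiset of points.\<close>
definition cylinder :: "nat \<Rightarrow> nat \<Rightarrow> (nat \<Rightarrow> 'a::{field,finite}) set multiset \<Rightarrow> bool" where
  "cylinder v r M \<longleftrightarrow> size M = card (UNIV :: 'a set) ^ (r + 1) \<and>
     (\<exists>F L. kspace v r F \<and> (\<forall>i<card (UNIV :: 'a set). kspace v (r + 1) (L i) \<and> F \<subseteq> L i) \<and>
        M = (\<Sum>i<card (UNIV :: 'a set). mset_set {P\<in>points v. P \<subseteq> L i \<and> \<not> P \<subseteq> F}))"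

definition gcc :: "'a::{field,finite} itself \<Rightarrow> nat \<Rightarrow> nat \<Rightarrow> bool" where
  "gcc _ v r \<longleftrightarrow> (\<forall>S :: (nat \<Rightarrow> 'a) set set.
     S \<subseteq> points v \<and> finite S \<and> card S = card (UNIV :: 'a set) ^ (r + 1) \<and> spanning v S \<and> divisible v r S
     \<longrightarrow> cylinder v r (mset_set S))"

end

theory Submission imports Defs "HOL-Library.Function_Algebras" "HOL.Vector_Spaces" begin
definition sc :: "'a::field \<Rightarrow> (nat \<Rightarrow> 'a) \<Rightarrow> (nat \<Rightarrow> 'a)" where
  "sc c x = (\<lambda>i. c * x i)"
interpretation V: vector_space "sc :: 'a::field \<Rightarrow> _"
  by unfold_locales (auto simp: sc_def fun_eq_iff algebra_simps)

lemma sum_fun_apply: "(\<Sum>x\<in>B. f x) i = (\<Sum>x\<in>B. f x i)"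
  by (induction B rule: infinite_finite_induct) auto

lemma lincomb_eq: "lincomb c B = (\<Sum>x\<in>B. sc (c x) x)"
  by (simp add: lincomb_def fun_eq_iff sum_fun_apply sc_def)

lemma lspan_eq: "lspan A = V.span A"
  unfolding lspan_def V.span_explicit lincomb_eq by blast

lemma lin_indep_eq: "finite B \<Longrightarrow> lin_indep B \<longleftrightarrow> V.independent B"
  unfolding lin_indep_def V.dependent_finite lincomb_eq zero_fun_def[symmetric] by blast

lemma kspace_eq: "kspace n k U \<longleftrightarrow> (\<exists>B. finite B \<and> card B = k \<and> B \<subseteq> vecs n \<and> V.independent B \<and> U = V.span B)"
  unfolding kspace_def lspan_eq using lin_indep_eq by blast

lemma vecs_subspace: "V.subspace (vecs n)"
  by (auto simp: V.subspace_def vecs_def sc_def)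

definition ee :: "nat \<Rightarrow> nat \<Rightarrow> 'a::field" where "ee i = (\<lambda>j. if j = i then 1 else 0)"

lemma ee_inj: "inj ee"
  by (auto simp: inj_def ee_def fun_eq_iff)

lemma ee_apply: "ee k i = (if i = k then 1 else 0)"
  by (simp add: ee_def)

lemma sum_delta_mult: "finite A \<Longrightarrow> (\<Sum>k\<in>A. f k * (if i = k then 1 else 0)) = (if i \<in> A then f i else (0::'a::semiring_1))"
  by (induct A rule: finite_induct) auto

lemma vecs_span: "vecs n = V.span (ee ` {..<n})"
proof
  show "V.span (ee ` {..<n}) \<subseteq> vecs n"
    by (rule V.span_minimal[OF _ vecs_subspace]) (auto simp: vecs_def ee_def)
  show "vecs n \<subseteq> V.span (ee ` {..<n})"
  proof
    fix x assume x: "x \<in> vecs n"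
    have eq: "x = (\<Sum>i<n. sc (x i) (ee i))"
      by (rule ext) (use x in \<open>simp add: sum_fun_apply sc_def ee_apply sum_delta_mult vecs_def\<close>)
    have "(\<Sum>i<n. sc (x i) (ee i)) \<in> V.span (ee ` {..<n})"
      by (intro V.span_sum V.span_scale V.span_base) auto
    then show "x \<in> V.span (ee ` {..<n})" using eq by simp
  qed
qed

lemma ee_indep: "V.independent (ee ` {..<n} :: (nat \<Rightarrow> 'a::field) set)"
proof -
  have "\<forall>u::(nat \<Rightarrow> 'a) \<Rightarrow> 'a. (\<exists>v\<in>ee ` {..<n}. u v \<noteq> 0) \<longrightarrow> (\<Sum>v\<in>ee ` {..<n}. sc (u v) v) \<noteq> 0"
  proof (intro allI impI)
    fix u :: "(nat \<Rightarrow> 'a) \<Rightarrow> 'a" assume "\<exists>v\<in>ee ` {..<n}. u v \<noteq> 0"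
    then obtain i where i: "i < n" "u (ee i) \<noteq> 0" by auto
    have "(\<Sum>v\<in>ee ` {..<n}. sc (u v) v) i = (\<Sum>k<n. sc (u (ee k)) (ee k)) i"
      by (subst sum.reindex) (auto intro: inj_on_subset[OF ee_inj])
    also have "\<dots> = u (ee i)" using i
      by (simp add: sum_fun_apply sc_def sum_delta_mult ee_apply)
    finally have "(\<Sum>v\<in>ee ` {..<n}. sc (u v) v) i \<noteq> 0" using i by simp
    then show "(\<Sum>v\<in>ee ` {..<n}. sc (u v) v) \<noteq> 0" by (auto simp: zero_fun_def)
  qed
  then show ?thesis by (subst V.dependent_finite) auto
qed

lemma card_ee: "card (ee ` {..<n}) = n"
  by (subst card_image) (auto intro: inj_on_subset[OF ee_inj])

lemma vecs_kspace: "n \<le> m \<Longrightarrow> kspace m n (vecs n)"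
  unfolding kspace_eq
proof (rule exI[of _ "ee ` {..<n}"], intro conjI)
  assume "n \<le> m"
  then show "ee ` {..<n} \<subseteq> vecs m" by (auto simp: vecs_def ee_def)
qed (auto simp: card_ee ee_indep vecs_span)
lemma span_eq_card:
  assumes "finite B" "V.independent B" "V.independent C" "C \<subseteq> V.span B" "card C = card B"
  shows "V.span C = V.span B"
proof
  show "V.span C \<subseteq> V.span B" using assms(4) by (simp add: V.span_minimal)
  show "V.span B \<subseteq> V.span C"
  proof (rule ccontr)
    assume "\<not> V.span B \<subseteq> V.span C"
    then obtain x where x: "x \<in> V.span B" "x \<notin> V.span C" by auto
    have fC: "finite C" using V.independent_span_bound[OF assms(1,3,4)] by simp
    have "V.independent (insert x C)" using x assms(3) by (simp add: V.independent_insertI)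
    moreover have "insert x C \<subseteq> V.span B" using x assms(4) by auto
    ultimately have "card (insert x C) \<le> card B" using V.independent_span_bound[OF assms(1)] by blast
    moreover have "x \<notin> C" using x V.span_base by blast
    ultimately show False using fC assms(5) by simp
  qed
qed

lemma card_eq_span:
  assumes "finite B" "finite C" "V.independent B" "V.independent C" "V.span B = V.span C"
  shows "card B = card C"
  using V.independent_span_bound[OF assms(1,4)] V.independent_span_bound[OF assms(2,3)]
    V.span_superset assms(5) by (metis le_antisym)

lemma basis_of_subspace:
  assumes "V.subspace W" "W \<subseteq> V.span B" "finite B"
  shows "\<exists>C. finite C \<and> C \<subseteq> W \<and> V.independent C \<and> V.span C = W"
proof -
  obtain C where C: "C \<subseteq> W" "V.independent C" "W \<subseteq> V.span C"
    using V.maximal_independent_subset by blast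
  have "finite C" using V.independent_span_bound[OF assms(3) C(2)] C(1) assms(2) by blast
  moreover have "V.span C = W" using C assms(1) V.span_minimal by blast
  ultimately show ?thesis using C by blast
qed

lemma kspace_sub: "kspace n k U \<Longrightarrow> V.subspace U \<and> U \<subseteq> vecs n"
  unfolding kspace_eq using V.span_minimal[OF _ vecs_subspace] by blast

lemma kspace_mono: "kspace n k U \<Longrightarrow> U \<subseteq> vecs m \<Longrightarrow> kspace m k U"
  unfolding kspace_eq using V.span_superset by blast

lemma hyperplane_split:
  assumes H: "kspace n (n - 1) H" and u: "u \<in> vecs n" "u \<notin> H" and y: "y \<in> vecs n"
  shows "\<exists>a. y - sc a u \<in> H"
proof -
  obtain D where D: "finite D" "card D = n - 1" "D \<subseteq> vecs n" "V.independent D" "H = V.span D"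
    using H unfolding kspace_eq by blast
  have n: "n \<ge> 1"
  proof (rule ccontr)
    assume "\<not> n \<ge> 1"
    then have "u = 0" using u by (auto simp: vecs_def fun_eq_iff)
    then show False using u D V.span_zero[of D] by blast
  qed
  have ind: "V.independent (insert u D)" using u D by (simp add: V.independent_insertI)
  have "card (insert u D) = n" using u D n V.span_base by (subst card_insert_disjoint) auto
  moreover have "insert u D \<subseteq> V.span (ee ` {..<n})" using u D vecs_span[of n] by auto
  ultimately have "V.span (insert u D) = V.span (ee ` {..<n})"
    using span_eq_card[OF _ ee_indep ind] by (simp add: card_ee)
  then have "y \<in> V.span (insert u D)" using y by (simp add: vecs_span)
  then show ?thesis using D V.span_breakdown_eq by blast
qed

lemma kspace_inter_hyperplane:
  assumes U: "kspace n k U" and H: "kspace n (n - 1) H" and nU: "\<not> U \<subseteq> H"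
  shows "kspace n (k - 1) (U \<inter> H)"
proof -
  obtain B where B: "finite B" "card B = k" "B \<subseteq> vecs n" "V.independent B" "U = V.span B"
    using U unfolding kspace_eq by blast
  have sU: "V.subspace U" "U \<subseteq> vecs n" using kspace_sub[OF U] by auto
  have sH: "V.subspace H" "H \<subseteq> vecs n" using kspace_sub[OF H] by auto
  have "V.subspace (U \<inter> H)" using sU sH by (simp add: V.subspace_inter)
  then obtain C where C: "finite C" "C \<subseteq> U \<inter> H" "V.independent C" "V.span C = U \<inter> H"
    using basis_of_subspace[of "U \<inter> H" B] B by blast
  obtain u where u: "u \<in> U" "u \<notin> H" using nU by blast
  have ind: "V.independent (insert u C)" using u C by (simp add: V.independent_insertI)
  have sp: "V.span (insert u C) = U"
  proof
    show "V.span (insert u C) \<subseteq> U" using u C sU V.span_minimal by (metis Int_subset_iff insert_subset)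
    show "U \<subseteq> V.span (insert u C)"
    proof
      fix y assume y: "y \<in> U"
      obtain a where a: "y - sc a u \<in> H" using hyperplane_split[OF H _ u(2)] u y sU by blast
      have "y - sc a u \<in> U" using y u sU(1) by (simp add: V.subspace_diff V.subspace_scale)
      then have "y - sc a u \<in> V.span C" using a C by simp
      then show "y \<in> V.span (insert u C)" using V.span_breakdown_eq by blast
    qed
  qed
  have "card (insert u C) = k" using card_eq_span[OF _ B(1) ind B(4)] C(1) sp B by simp
  moreover have "u \<notin> C" using u C by auto
  ultimately have "card C = k - 1" using C(1) by simp
  then show ?thesis unfolding kspace_eq using C sU by (intro exI[of _ C]) auto
qed
lemma points_iff: "P \<in> points n \<longleftrightarrow> (\<exists>x. x \<in> vecs n \<and> x \<noteq> 0 \<and> P = V.span {x})"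
proof
  assume "P \<in> points n"
  then obtain B where B: "finite B" "card B = 1" "B \<subseteq> vecs n" "V.independent B" "P = V.span B"
    unfolding points_def kspace_eq by blast
  then obtain x where "B = {x}" using card_1_singletonE by blast
  then show "\<exists>x. x \<in> vecs n \<and> x \<noteq> 0 \<and> P = V.span {x}" using B by auto
next
  assume "\<exists>x. x \<in> vecs n \<and> x \<noteq> 0 \<and> P = V.span {x}"
  then obtain x where "x \<in> vecs n" "x \<noteq> 0" "P = V.span {x}" by blast
  then show "P \<in> points n" unfolding points_def kspace_eq by (intro CollectI exI[of _ "{x}"]) auto
qed

lemma hom_intro:
  assumes "\<And>x y. f (x + y) = f x + f y" "\<And>c x. f (sc c x) = sc c (f x)"
  shows "module_hom (sc :: 'a::field \<Rightarrow> _) (sc :: 'a \<Rightarrow> _) f"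
  using assms by (auto simp: module_hom_def module_hom_axioms_def V.module_axioms)

lemma kspace_image:
  assumes f: "module_hom sc sc f" and W: "kspace n k W" and inj: "inj_on f W" and sub: "f ` W \<subseteq> vecs m"
  shows "kspace m k (f ` W)"
proof -
  obtain B where B: "finite B" "card B = k" "B \<subseteq> vecs n" "V.independent B" "W = V.span B"
    using W unfolding kspace_eq by blast
  have BW: "B \<subseteq> W" using B V.span_superset by blast
  show ?thesis unfolding kspace_eq
  proof (intro exI[of _ "f ` B"] conjI)
    show "finite (f ` B)" using B by simp
    show "card (f ` B) = k" using B BW inj by (simp add: card_image inj_on_subset)
    show "f ` B \<subseteq> vecs m" using BW sub by blast
    show "V.independent (f ` B)" using module_hom.independent_injective_image[OF f B(4)] inj B by simp
    show "f ` W = V.span (f ` B)" using module_hom.span_image[OF f] B by simp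
  qed
qed
lemma subspace_span_single: "V.subspace U \<Longrightarrow> V.span {y} \<subseteq> U \<longleftrightarrow> y \<in> U"
proof
  assume "V.span {y} \<subseteq> U" then show "y \<in> U" using V.span_base[of y "{y}"] by blast
next
  assume "V.subspace U" "y \<in> U" then show "V.span {y} \<subseteq> U" using V.span_minimal[of "{y}" U] by simp
qed

lemma kspace_points_sub: "P \<in> points n \<Longrightarrow> P \<subseteq> vecs n"
  unfolding points_def using kspace_sub by blast

definition rep :: "(nat \<Rightarrow> 'a::field) set \<Rightarrow> (nat \<Rightarrow> 'a)" where
  "rep P = (SOME x. x \<in> P \<and> x \<noteq> 0)"

lemma rep_props:
  assumes "P \<in> points n"
  shows "rep P \<in> vecs n" "rep P \<noteq> 0" "V.span {rep P} = P"
proof -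
  obtain x where x: "x \<in> vecs n" "x \<noteq> 0" "P = V.span {x}" using assms points_iff by blast
  have "\<exists>y. y \<in> P \<and> y \<noteq> 0" using x V.span_base by blast
  then have r: "rep P \<in> P" "rep P \<noteq> 0" unfolding rep_def by (metis (mono_tags, lifting) someI_ex)+
  then show "rep P \<noteq> 0" by simp
  show "rep P \<in> vecs n" using r kspace_points_sub[OF assms] by blast
  obtain k where k: "rep P = sc k x" using r x V.span_singleton by auto
  have k0: "k \<noteq> 0" using k r by (auto simp: sc_def zero_fun_def)
  have "x = sc (inverse k) (rep P)" using k k0 by (simp add: sc_def fun_eq_iff)
  then have "x \<in> V.span {rep P}" by (simp add: V.span_base V.span_scale)
  then have "P \<subseteq> V.span {rep P}" using x V.span_minimal by (metis V.subspace_span empty_subsetI insert_subset)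
  moreover have "V.span {rep P} \<subseteq> P" using r x by (simp add: V.span_minimal)
  ultimately show "V.span {rep P} = P" by blast
qed

definition pr :: "nat \<Rightarrow> (nat \<Rightarrow> 'a::field) \<Rightarrow> (nat \<Rightarrow> 'a)" where
  "pr v x = (\<lambda>i. if i < v then x i else 0)"

lemma pr_hom: "module_hom sc sc (pr v)"
  by (rule hom_intro) (auto simp: pr_def sc_def fun_eq_iff)

lemma pr_vecs: "pr v x \<in> vecs v" by (simp add: pr_def vecs_def)
lemma pr_id: "x \<in> vecs v \<Longrightarrow> pr v x = x" by (auto simp: pr_def vecs_def fun_eq_iff)
lemma pr_ee: "pr v (ee v) = 0" by (simp add: pr_def ee_def fun_eq_iff)
lemma pr_decomp: "x \<in> vecs (Suc v) \<Longrightarrow> x = pr v x + sc (x v) (ee v)"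
  by (auto simp: pr_def vecs_def fun_eq_iff sc_def ee_def)
lemma ee_vecs: "ee v \<in> vecs (Suc v)" by (simp add: ee_def vecs_def)
lemma vecs_Suc: "vecs v \<subseteq> vecs (Suc v)" by (auto simp: vecs_def)
lemma ee_nz: "ee v \<noteq> 0" by (auto simp: ee_def fun_eq_iff)
lemma ee_notin: "ee v \<notin> vecs v" by (auto simp: ee_def vecs_def)

definition Phi :: "nat \<Rightarrow> (nat \<Rightarrow> 'a::field) set \<times> 'a \<Rightarrow> (nat \<Rightarrow> 'a) set" where
  "Phi v p = V.span {rep (fst p) + sc (snd p) (ee v)}"

lemma Phi_vec:
  assumes "P \<in> points v"
  shows "rep P + sc l (ee v) \<in> vecs (Suc v)" "pr v (rep P + sc l (ee v)) = rep P"
    "rep P + sc l (ee v) \<noteq> 0"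
proof -
  show "rep P + sc l (ee v) \<in> vecs (Suc v)"
    using rep_props[OF assms] vecs_Suc ee_vecs vecs_subspace by (meson V.subspace_add V.subspace_scale subsetD)
  show p: "pr v (rep P + sc l (ee v)) = rep P"
    using rep_props[OF assms]
    by (simp add: module_hom.add[OF pr_hom] module_hom.scale[OF pr_hom] pr_ee pr_id V.scale_zero_right)
  show "rep P + sc l (ee v) \<noteq> 0"
    using p rep_props[OF assms] by (metis module_hom.zero[OF pr_hom])
qed

lemma Phi_point: "P \<in> points v \<Longrightarrow> Phi v (P, l) \<in> points (Suc v)"
  using Phi_vec[of P v l] unfolding Phi_def points_iff[of _ "Suc v"] by auto

lemma Phi_pr: assumes "P \<in> points v" shows "pr v ` Phi v (P, l) = P"
proof -
  have "pr v ` Phi v (P, l) = V.span (pr v ` {rep P + sc l (ee v)})"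
    unfolding Phi_def fst_conv snd_conv by (rule module_hom.span_image[OF pr_hom, symmetric])
  also have "\<dots> = V.span {rep P}" using Phi_vec(2)[OF assms] by simp
  finally show ?thesis using rep_props(3)[OF assms] by simp
qed

lemma Phi_inj: "S \<subseteq> points v \<Longrightarrow> inj_on (Phi v) (S \<times> UNIV)"
proof (rule inj_onI, clarify)
  fix P l P' l' assume S: "S \<subseteq> points v" and P: "P \<in> S" "P' \<in> S" and eq: "Phi v (P, l) = Phi v (P', l')"
  have PP: "P = P'" using Phi_pr[of P v l] Phi_pr[of P' v l'] eq P S by auto
  let ?y = "rep P + sc l (ee v)" and ?y' = "rep P + sc l' (ee v)"
  have "?y \<in> V.span {?y'}" using eq PP unfolding Phi_def by (metis V.span_base singletonI fst_conv snd_conv)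
  then obtain k where k: "?y = sc k ?y'" using V.span_singleton by auto
  have "pr v ?y = sc k (pr v ?y')" using k module_hom.scale[OF pr_hom] by metis
  moreover have "P \<in> points v" using P S by auto
  ultimately have "rep P = sc k (rep P)" using Phi_vec(2)[of P v] by auto
  then have "k = 1" using rep_props[of P v] P S by (auto simp: sc_def fun_eq_iff)
  then have "?y v = ?y' v" using k by (simp add: sc_def)
  moreover have "rep P v = 0" using rep_props[of P v] P S by (auto simp: vecs_def)
  ultimately have "l = l'" by (simp add: sc_def ee_def)
  then show "P = P' \<and> l = l'" using PP by simp
qed
lemma Phi_sub: "P \<in> points v \<Longrightarrow> V.subspace H \<Longrightarrow> Phi v (P, l) \<subseteq> H \<longleftrightarrow> rep P + sc l (ee v) \<in> H"
  unfolding Phi_def fst_conv snd_conv by (rule subspace_span_single)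

lemma construction_spanning:
  fixes S :: "(nat \<Rightarrow> 'a::{field,finite}) set set"
  assumes S: "S \<subseteq> points v" "S \<noteq> {}" "spanning v S"
  shows "spanning (Suc v) (Phi v ` (S \<times> UNIV))"
proof -
  let ?S' = "Phi v ` (S \<times> UNIV)"
  have "\<Union>?S' \<subseteq> vecs (Suc v)" using S(1) Phi_point kspace_points_sub by blast
  then have A: "V.span (\<Union>?S') \<subseteq> vecs (Suc v)" using V.span_minimal vecs_subspace by blast
  have rep_in: "rep P + sc l (ee v) \<in> V.span (\<Union>?S')" if "P \<in> S" for P l
  proof -
    have "rep P + sc l (ee v) \<in> Phi v (P, l)" unfolding Phi_def by (simp add: V.span_base)
    then show ?thesis using that by (intro V.span_base) blast
  qed
  have "\<Union>S \<subseteq> V.span (\<Union>?S')"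
  proof
    fix x assume "x \<in> \<Union>S"
    then obtain P where P: "P \<in> S" "x \<in> P" by blast
    have "rep P \<in> V.span (\<Union>?S')" using rep_in[OF P(1), of 0] by simp
    then have "V.span {rep P} \<subseteq> V.span (\<Union>?S')" using subspace_span_single by blast
    then show "x \<in> V.span (\<Union>?S')" using P rep_props(3)[of P v] S(1) by auto
  qed
  then have vv: "vecs v \<subseteq> V.span (\<Union>?S')"
    using S(3) unfolding spanning_def lspan_eq using V.span_minimal by blast
  obtain P where P: "P \<in> S" using S(2) by blast
  have "(rep P + sc 1 (ee v)) - (rep P + sc 0 (ee v)) \<in> V.span (\<Union>?S')"
    using rep_in[OF P, of 1] rep_in[OF P, of 0] by (rule V.span_diff)
  then have e: "ee v \<in> V.span (\<Union>?S')" by simp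
  have "vecs (Suc v) \<subseteq> V.span (\<Union>?S')"
  proof
    fix y :: "nat \<Rightarrow> 'a" assume y: "y \<in> vecs (Suc v)"
    have "pr v y + sc (y v) (ee v) \<in> V.span (\<Union>?S')"
      using vv pr_vecs e by (intro V.span_add V.span_scale) auto
    then show "y \<in> V.span (\<Union>?S')" using pr_decomp[OF y] by simp
  qed
  then show ?thesis using A unfolding spanning_def lspan_eq by blast
qed
lemma construction_divisible:
  fixes S :: "(nat \<Rightarrow> 'a::{field,finite}) set set"
  assumes S: "S \<subseteq> points v" "finite S" "card S = card (UNIV::'a set)^(r+1)" "divisible v r S"
  shows "divisible (Suc v) (Suc r) (Phi v ` (S \<times> UNIV))"
  unfolding divisible_def
proof (intro allI impI)
  let ?q = "card (UNIV::'a set)"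
  let ?S' = "Phi v ` (S \<times> UNIV)"
  fix H' :: "(nat \<Rightarrow> 'a) set" assume H'0: "kspace (Suc v) (Suc v - 1) H'"
  then have H': "kspace (Suc v) v H'" by simp
  have sH': "V.subspace H'" "H' \<subseteq> vecs (Suc v)" using kspace_sub[OF H'] by auto
  have inj: "inj_on (Phi v) (S \<times> UNIV)" using Phi_inj[OF S(1)] .
  have "card ?S' = card S * ?q" using card_image[OF inj] S(2) by (simp add: card_cartesian_product)
  then have cS': "card ?S' mod ?q ^ Suc r = 0" using S(3) by simp
  define A where "A = {p \<in> S \<times> UNIV. Phi v p \<subseteq> H'}"
  have "{P \<in> ?S'. P \<subseteq> H'} = Phi v ` A" unfolding A_def by auto
  then have cA: "card {P \<in> ?S'. P \<subseteq> H'} = card A"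
    using card_image[OF inj_on_subset[OF inj]] unfolding A_def by auto
  have Amem: "(P, l) \<in> A \<longleftrightarrow> P \<in> S \<and> rep P + sc l (ee v) \<in> H'" for P l
    unfolding A_def using Phi_sub[OF _ sH'(1)] S(1) by auto
  have "card A mod ?q ^ Suc r = 0"
  proof (cases "ee v \<in> H'")
    case True
    have "rep P + sc l (ee v) \<in> H' \<longleftrightarrow> P \<subseteq> H'" if P: "P \<in> S" for P l
    proof -
      have es: "sc l (ee v) \<in> H'" using True sH'(1) by (rule V.subspace_scale[rotated])
      have "rep P + sc l (ee v) \<in> H' \<longleftrightarrow> rep P \<in> H'"
      proof
        assume "rep P + sc l (ee v) \<in> H'"
        from V.subspace_diff[OF sH'(1) this es] show "rep P \<in> H'" by simp
      next
        assume "rep P \<in> H'"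
        from V.subspace_add[OF sH'(1) this es] show "rep P + sc l (ee v) \<in> H'" .
      qed
      also have "\<dots> \<longleftrightarrow> V.span {rep P} \<subseteq> H'" using subspace_span_single[OF sH'(1)] by simp
      finally show ?thesis using rep_props(3)[of P v] P S(1) by auto
    qed
    then have "A = {P \<in> S. P \<subseteq> H'} \<times> UNIV" using Amem by auto
    then have cA2: "card A = card {P \<in> S. P \<subseteq> H'} * ?q" by (simp add: card_cartesian_product)
    show ?thesis
    proof (cases "vecs v \<subseteq> H'")
      case True
      then have "{P \<in> S. P \<subseteq> H'} = S" using S(1) kspace_points_sub by blast
      then show ?thesis using cA2 S(3) by simp
    next
      case False
      have "kspace (Suc v) (v - 1) (vecs v \<inter> H')"
        using kspace_inter_hyperplane[OF vecs_kspace H'0 False] by simp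
      then have Hv: "kspace v (v - 1) (vecs v \<inter> H')" using kspace_mono by blast
      have "{P \<in> S. P \<subseteq> vecs v \<inter> H'} = {P \<in> S. P \<subseteq> H'}" using S(1) kspace_points_sub by blast
      moreover have "card {P \<in> S. P \<subseteq> vecs v \<inter> H'} mod ?q ^ r = card S mod ?q ^ r"
        using S(4) Hv unfolding divisible_def by blast
      ultimately have "card {P \<in> S. P \<subseteq> H'} mod ?q ^ r = card S mod ?q ^ r" by simp
      also have "\<dots> = 0" using S(3) by simp
      finally obtain m where "card {P \<in> S. P \<subseteq> H'} = ?q ^ r * m" by auto
      then show ?thesis using cA2 by simp
    qed
  next
    case False
    have "inj_on fst A"
    proof (rule inj_onI, clarify)
      fix P l P' l' assume a: "(P, l) \<in> A" "(P', l') \<in> A" "fst (P, l) = fst (P', l')"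
      then have PP: "P = P'" by simp
      have m: "rep P + sc l (ee v) \<in> H'" "rep P + sc l' (ee v) \<in> H'" using a PP Amem by auto
      have "(rep P + sc l (ee v)) - (rep P + sc l' (ee v)) \<in> H'"
        using V.subspace_diff[OF sH'(1) m] .
      then have "sc (l - l') (ee v) \<in> H'" by (simp add: V.scale_left_diff_distrib)
      then have "sc (inverse (l - l')) (sc (l - l') (ee v)) \<in> H'"
        using sH'(1) by (rule V.subspace_scale[rotated])
      then have "l - l' = 0" using False by (cases "l - l' = 0") (auto simp: V.scale_scale)
      then show "P = P' \<and> l = l'" using PP by simp
    qed
    moreover have "fst ` A = S"
    proof
      show "fst ` A \<subseteq> S" using Amem by auto
      show "S \<subseteq> fst ` A"
      proof
        fix P assume P: "P \<in> S"
        obtain a where a: "rep P - sc a (ee v) \<in> H'"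
          using hyperplane_split[OF H'0 ee_vecs False, of "rep P"] rep_props(1)[of P v] P S(1) vecs_Suc by auto
        have "rep P - sc a (ee v) = rep P + sc (- a) (ee v)" by (simp add: sc_def fun_eq_iff)
        then have "(P, - a) \<in> A" using a P Amem by simp
        then show "P \<in> fst ` A" by force
      qed
    qed
    ultimately have "card A = card S" using card_image by fastforce
    then show ?thesis using S(3) by simp
  qed
  then show "card {P \<in> ?S'. P \<subseteq> H'} mod ?q ^ Suc r = card ?S' mod ?q ^ Suc r" using cA cS' by simp
qed
lemma filter_mset_sum: "filter_mset P (\<Sum>i\<in>I. M i) = (\<Sum>i\<in>I. filter_mset P (M i))"
  by (induction I rule: infinite_finite_induct) auto

lemma image_mset_sum': "image_mset f (\<Sum>i\<in>I. M i) = (\<Sum>i\<in>I. image_mset f (M i))"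
  by (induction I rule: infinite_finite_induct) auto

definition sg :: "'a::field \<Rightarrow> nat \<Rightarrow> nat \<Rightarrow> (nat \<Rightarrow> 'a) \<Rightarrow> (nat \<Rightarrow> 'a)" where
  "sg c j v x = x + sc (c * x j) (ee v)"

lemma sg_hom: "module_hom sc sc (sg c j v)"
  by (rule hom_intro) (auto simp: sg_def sc_def fun_eq_iff algebra_simps)

lemma pr_sg: "x \<in> vecs v \<Longrightarrow> pr v (sg c j v x) = x"
  unfolding sg_def by (simp add: module_hom.add[OF pr_hom] module_hom.scale[OF pr_hom] pr_ee pr_id V.scale_zero_right)

lemma sg_vecs: "x \<in> vecs v \<Longrightarrow> sg c j v x \<in> vecs (Suc v)"
  unfolding sg_def using vecs_Suc ee_vecs vecs_subspace by (meson V.subspace_add V.subspace_scale subsetD)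

lemma sg_pr: "z \<in> sg c j v ` vecs v \<Longrightarrow> sg c j v (pr v z) = z"
  using pr_sg by fastforce

lemma inj_pr_Hg: "inj_on (pr v) (sg c j v ` vecs v)"
  by (metis inj_on_inverseI sg_pr)

lemma inj_sg: "inj_on (sg c j v) (vecs v)"
  by (metis inj_on_inverseI pr_sg)

lemma Hg_kspace: "kspace (Suc v) v (sg c j v ` vecs v)"
  by (rule kspace_image[OF sg_hom vecs_kspace inj_sg]) (auto simp: sg_vecs)

lemma Hg_sub: "sg c j v ` vecs v \<subseteq> vecs (Suc v)"
  using sg_vecs by blast

lemma exists_avoid:
  assumes "f0 \<in> vecs (Suc v)" "f0 \<noteq> 0"
  shows "\<exists>c j. f0 \<notin> sg c j v ` vecs v"
proof (cases "pr v f0 = 0")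
  case True
  have "f0 \<notin> sg 0 0 v ` vecs v"
  proof
    assume "f0 \<in> sg 0 0 v ` vecs v"
    then obtain x where x: "x \<in> vecs v" "f0 = sg 0 0 v x" by blast
    then have "f0 = x" by (simp add: sg_def sc_def zero_fun_def[symmetric])
    then show False using True x assms pr_id by metis
  qed
  then show ?thesis by blast
next
  case False
  then obtain j where j: "pr v f0 j \<noteq> 0" by (auto simp: fun_eq_iff)
  then have j': "j < v" "f0 j \<noteq> 0" by (auto simp: pr_def split: if_splits)
  define c where "c = (f0 v + 1) / f0 j"
  have "f0 \<notin> sg c j v ` vecs v"
  proof
    assume "f0 \<in> sg c j v ` vecs v"
    then obtain x where x: "x \<in> vecs v" "f0 = sg c j v x" by blast
    then have "f0 v = c * x j" "f0 j = x j" using j'(1) by (auto simp: sg_def sc_def ee_def vecs_def)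
    then have "f0 v = f0 v + 1" using j' unfolding c_def by simp
    then show False by simp
  qed
  then show ?thesis by blast
qed
lemma finite_vecs: "finite (vecs n :: (nat \<Rightarrow> 'a::{field,finite}) set)"
proof -
  have "vecs n \<subseteq> (\<lambda>xs i. if i < n then xs ! i else (0::'a)) ` {xs. set xs \<subseteq> UNIV \<and> length xs = n}"
  proof
    fix x :: "nat \<Rightarrow> 'a" assume x: "x \<in> vecs n"
    have "x = (\<lambda>i. if i < n then map x [0..<n] ! i else 0)" using x by (auto simp: vecs_def fun_eq_iff)
    then show "x \<in> (\<lambda>xs i. if i < n then xs ! i else (0::'a)) ` {xs. set xs \<subseteq> UNIV \<and> length xs = n}"
      by (intro image_eqI[of _ _ "map x [0..<n]"]) auto
  qed
  then show ?thesis by (rule finite_subset) (intro finite_imageI finite_lists_length_eq finite_UNIV)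
qed

lemma finite_points: "finite (points n :: (nat \<Rightarrow> 'a::{field,finite}) set set)"
proof -
  have "points n \<subseteq> Pow (vecs n :: (nat \<Rightarrow> 'a) set)" using kspace_points_sub by blast
  then show ?thesis using finite_vecs by (meson finite_Pow_iff finite_subset)
qed

lemma image_sub_inj: "inj_on f C \<Longrightarrow> A \<subseteq> C \<Longrightarrow> B \<subseteq> C \<Longrightarrow> f ` A \<subseteq> f ` B \<Longrightarrow> A \<subseteq> B"
proof
  fix x assume inj: "inj_on f C" and AC: "A \<subseteq> C" and BC: "B \<subseteq> C" and AB: "f ` A \<subseteq> f ` B" and x: "x \<in> A"
  then have "f x \<in> f ` B" by blast
  then show "x \<in> B" using inj_on_image_mem_iff[OF inj _ BC] x AC by blast
qed

lemma reduction:
  fixes S :: "(nat \<Rightarrow> 'a::{field,finite}) set set"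
  assumes S: "S \<subseteq> points v" "finite S" "card S = card (UNIV::'a set)^(r+1)"
    and cyl: "cylinder (Suc v) (Suc r) (mset_set (Phi v ` (S \<times> UNIV)))"
  shows "cylinder v r (mset_set S)"
proof -
  let ?q = "card (UNIV::'a set)"
  let ?S' = "Phi v ` (S \<times> UNIV)"
  obtain F' L' where F': "kspace (Suc v) (Suc r) F'"
    and L': "\<And>i. i < ?q \<Longrightarrow> kspace (Suc v) (Suc r + 1) (L' i) \<and> F' \<subseteq> L' i"
    and M: "mset_set ?S' = (\<Sum>i<?q. mset_set {P\<in>points (Suc v). P \<subseteq> L' i \<and> \<not> P \<subseteq> F'})"
    using cyl unfolding cylinder_def by blast
  obtain B where B: "finite B" "card B = Suc r" "B \<subseteq> vecs (Suc v)" "V.independent B" "F' = V.span B"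
    using F' unfolding kspace_eq by blast
  then obtain f0 where f0: "f0 \<in> B" by (metis card.empty ex_in_conv nat.distinct(1))
  have f0nz: "f0 \<noteq> 0" using f0 B(4) V.dependent_zero by blast
  have f0F: "f0 \<in> F'" using f0 B(5) V.span_base by blast
  obtain c j where cj: "f0 \<notin> sg c j v ` vecs v" using exists_avoid[OF _ f0nz] f0 B(3) by blast
  define H where "H = sg c j v ` vecs v"
  have Hk: "kspace (Suc v) (Suc v - 1) H" unfolding H_def using Hg_kspace by simp
  have sH: "V.subspace H" "H \<subseteq> vecs (Suc v)" using kspace_sub[OF Hk] by auto
  have injH: "inj_on (pr v) H" unfolding H_def by (rule inj_pr_Hg)
  have F'H: "\<not> F' \<subseteq> H" using f0F cj H_def by blast
  have F'': "kspace (Suc v) r (F' \<inter> H)" using kspace_inter_hyperplane[OF F' Hk F'H] by simp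
  have L'': "kspace (Suc v) (Suc r) (L' i \<inter> H)" if "i < ?q" for i
    using kspace_inter_hyperplane[OF conjunct1[OF L'[OF that]] Hk] F'H L'[OF that] by auto
  define F where "F = pr v ` (F' \<inter> H)"
  define L where "L i = pr v ` (L' i \<inter> H)" for i
  have Fk: "kspace v r F" unfolding F_def
    by (rule kspace_image[OF pr_hom F'' inj_on_subset[OF injH]]) (auto simp: pr_vecs)
  have Lk: "kspace v (Suc r) (L i)" if "i < ?q" for i unfolding L_def
    by (rule kspace_image[OF pr_hom L''[OF that] inj_on_subset[OF injH]]) (auto simp: pr_vecs)
  have FL: "F \<subseteq> L i" if "i < ?q" for i unfolding F_def L_def using L'[OF that] by auto
  have pt_down: "pr v ` P \<in> points v" if "P \<in> points (Suc v)" "P \<subseteq> H" for P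
  proof -
    have "pr v ` P \<subseteq> vecs v" using pr_vecs by blast
    then show ?thesis using that kspace_image[OF pr_hom _ inj_on_subset[OF injH]] unfolding points_def by auto
  qed
  have pt_up: "sg c j v ` P \<in> points (Suc v)" if "P \<in> points v" for P
  proof -
    have sub: "sg c j v ` P \<subseteq> vecs (Suc v)" using kspace_points_sub[OF that] sg_vecs by blast
    have k1: "kspace v 1 P" using that unfolding points_def by simp
    have "kspace (Suc v) 1 (sg c j v ` P)"
      by (rule kspace_image[OF sg_hom k1 inj_on_subset[OF inj_sg kspace_points_sub[OF that]] sub])
    then show ?thesis unfolding points_def by simp
  qed
  have prsg: "pr v ` sg c j v ` P = P" if "P \<subseteq> vecs v" for P
  proof -
    have "pr v ` sg c j v ` P = (\<lambda>x. pr v (sg c j v x)) ` P" by (simp add: image_image)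
    also have "\<dots> = (\<lambda>x. x) ` P" by (rule image_cong) (use that in \<open>auto intro: pr_sg\<close>)
    finally show ?thesis by simp
  qed
  have injPi: "inj_on ((`) (pr v)) {P. P \<subseteq> H}"
    by (rule inj_onI) (simp add: inj_on_image_eq_iff[OF injH])
  have E1: "(`) (pr v) ` {P \<in> ?S'. P \<subseteq> H} = S"
  proof
    show "(`) (pr v) ` {P \<in> ?S'. P \<subseteq> H} \<subseteq> S"
    proof clarify
      fix P l assume P: "P \<in> S"
      then have "P \<in> points v" using S(1) by blast
      then show "pr v ` Phi v (P, l) \<in> S" using Phi_pr[of P v l] P by simp
    qed
    show "S \<subseteq> (`) (pr v) ` {P \<in> ?S'. P \<subseteq> H}"
    proof
      fix P assume P: "P \<in> S"
      then have Pp: "P \<in> points v" using S(1) by auto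
      have "rep P + sc (c * rep P j) (ee v) = sg c j v (rep P)" by (simp add: sg_def)
      then have "rep P + sc (c * rep P j) (ee v) \<in> H"
        unfolding H_def using rep_props(1)[OF Pp] by simp
      then have "Phi v (P, c * rep P j) \<subseteq> H" using Phi_sub[OF Pp sH(1)] by blast
      moreover have "pr v ` Phi v (P, c * rep P j) = P" using Phi_pr[OF Pp] .
      moreover have "Phi v (P, c * rep P j) \<in> ?S'" using P by simp
      ultimately show "P \<in> (`) (pr v) ` {P \<in> ?S'. P \<subseteq> H}"
        by (intro image_eqI[of _ _ "Phi v (P, c * rep P j)"]) auto
    qed
  qed
  have E2: "(`) (pr v) ` {P \<in> points (Suc v). P \<subseteq> L' i \<and> \<not> P \<subseteq> F' \<and> P \<subseteq> H}
      = {P \<in> points v. P \<subseteq> L i \<and> \<not> P \<subseteq> F}" if i: "i < ?q" for i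
  proof
    show "(`) (pr v) ` {P \<in> points (Suc v). P \<subseteq> L' i \<and> \<not> P \<subseteq> F' \<and> P \<subseteq> H}
      \<subseteq> {P \<in> points v. P \<subseteq> L i \<and> \<not> P \<subseteq> F}"
    proof
      fix Q assume "Q \<in> (`) (pr v) ` {P \<in> points (Suc v). P \<subseteq> L' i \<and> \<not> P \<subseteq> F' \<and> P \<subseteq> H}"
      then obtain P where P: "P \<in> points (Suc v)" "P \<subseteq> L' i" "\<not> P \<subseteq> F'" "P \<subseteq> H" and Q: "Q = pr v ` P"
        by blast
      have "pr v ` P \<subseteq> L i" unfolding L_def using P by blast
      moreover have "\<not> pr v ` P \<subseteq> F"
      proof
        assume "pr v ` P \<subseteq> F"
        then have "P \<subseteq> F' \<inter> H" unfolding F_def using image_sub_inj[OF injH P(4)] by blast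
        then show False using P by blast
      qed
      ultimately show "Q \<in> {P \<in> points v. P \<subseteq> L i \<and> \<not> P \<subseteq> F}"
        using pt_down[OF P(1,4)] Q by blast
    qed
    show "{P \<in> points v. P \<subseteq> L i \<and> \<not> P \<subseteq> F}
      \<subseteq> (`) (pr v) ` {P \<in> points (Suc v). P \<subseteq> L' i \<and> \<not> P \<subseteq> F' \<and> P \<subseteq> H}"
    proof
      fix P assume "P \<in> {P \<in> points v. P \<subseteq> L i \<and> \<not> P \<subseteq> F}"
      then have P: "P \<in> points v" "P \<subseteq> L i" "\<not> P \<subseteq> F" by auto
      have Pv: "P \<subseteq> vecs v" using kspace_points_sub[OF P(1)] .
      have sgH: "sg c j v ` P \<subseteq> H" unfolding H_def using Pv by blast
      have "sg c j v ` P \<subseteq> L' i"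
      proof
        fix z assume "z \<in> sg c j v ` P"
        then obtain x where x: "x \<in> P" "z = sg c j v x" by blast
        then obtain w where w: "w \<in> L' i \<inter> H" "x = pr v w" using P(2) unfolding L_def by blast
        have "sg c j v (pr v w) = w" using w sg_pr unfolding H_def by blast
        then show "z \<in> L' i" using x w by simp
      qed
      moreover have "\<not> sg c j v ` P \<subseteq> F'"
      proof
        assume "sg c j v ` P \<subseteq> F'"
        then have "pr v ` sg c j v ` P \<subseteq> F" unfolding F_def using sgH by blast
        then show False using prsg[OF Pv] P(3) by simp
      qed
      ultimately show "P \<in> (`) (pr v) ` {P \<in> points (Suc v). P \<subseteq> L' i \<and> \<not> P \<subseteq> F' \<and> P \<subseteq> H}"
        using pt_up[OF P(1)] sgH prsg[OF Pv] by (intro image_eqI[of _ _ "sg c j v ` P"]) auto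
    qed
  qed
  have finS': "finite ?S'" using S(2) by simp
  have "mset_set S = image_mset ((`) (pr v)) (mset_set {P \<in> ?S'. P \<subseteq> H})"
  proof -
    have "{P \<in> ?S'. P \<subseteq> H} \<subseteq> {P. P \<subseteq> H}" by blast
    from image_mset_mset_set[OF inj_on_subset[OF injPi this]] E1 show ?thesis by simp
  qed
  also have "\<dots> = image_mset ((`) (pr v)) (filter_mset (\<lambda>P. P \<subseteq> H) (mset_set ?S'))"
    using finS' by simp
  also have "\<dots> = (\<Sum>i<?q. image_mset ((`) (pr v))
      (mset_set {P \<in> points (Suc v). P \<subseteq> L' i \<and> \<not> P \<subseteq> F' \<and> P \<subseteq> H}))"
  proof -
    have fA: "finite {P \<in> points (Suc v). P \<subseteq> L' i \<and> \<not> P \<subseteq> F'}" for i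
      by (rule finite_subset[OF _ finite_points]) blast
    show ?thesis unfolding M filter_mset_sum image_mset_sum'
      by (intro sum.cong refl) (simp add: fA conj_assoc)
  qed
  also have "\<dots> = (\<Sum>i<?q. mset_set {P \<in> points v. P \<subseteq> L i \<and> \<not> P \<subseteq> F})"
  proof (intro sum.cong refl)
    fix i assume "i \<in> {..<?q}"
    show "image_mset ((`) (pr v)) (mset_set {P \<in> points (Suc v). P \<subseteq> L' i \<and> \<not> P \<subseteq> F' \<and> P \<subseteq> H})
      = mset_set {P \<in> points v. P \<subseteq> L i \<and> \<not> P \<subseteq> F}"
    proof -
      have "{P \<in> points (Suc v). P \<subseteq> L' i \<and> \<not> P \<subseteq> F' \<and> P \<subseteq> H} \<subseteq> {P. P \<subseteq> H}" by blast
      from image_mset_mset_set[OF inj_on_subset[OF injPi this]] E2 \<open>i \<in> {..<?q}\<close> show ?thesis by simp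
    qed
  qed
  finally have ME: "mset_set S = (\<Sum>i<?q. mset_set {P \<in> points v. P \<subseteq> L i \<and> \<not> P \<subseteq> F})" .
  show ?thesis unfolding cylinder_def
  proof (intro conjI exI[of _ F] exI[of _ L])
    show "size (mset_set S) = ?q ^ (r + 1)" using S(3) by simp
    show "\<forall>i<?q. kspace v (r + 1) (L i) \<and> F \<subseteq> L i" using Lk FL by simp
  qed (use Fk ME in auto)
qed
theorem mainTheorem6:
  fixes v r :: nat
  assumes "v \<ge> 1" and "r \<ge> 1"
    and "gcc TYPE('a::{field,finite}) (v + 1) (r + 1)"
  shows "gcc TYPE('a) v r"
  unfolding gcc_def
proof (intro allI impI)
  let ?q = "card (UNIV::'a set)"
  fix S :: "(nat \<Rightarrow> 'a) set set"
  assume A: "S \<subseteq> points v \<and> finite S \<and> card S = ?q ^ (r + 1) \<and> spanning v S \<and> divisible v r S"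
  then have S: "S \<subseteq> points v" "finite S" "card S = ?q ^ (r + 1)" "spanning v S" "divisible v r S" by auto
  have q0: "?q > 0" by (simp add: finite_UNIV_card_ge_0)
  then have "S \<noteq> {}" using S(3) by auto
  let ?S' = "Phi v ` (S \<times> UNIV)"
  have "?S' \<subseteq> points (v + 1)" using S(1) Phi_point by auto
  moreover have "finite ?S'" using S(2) by simp
  moreover have "card ?S' = ?q ^ (r + 1 + 1)"
    using card_image[OF Phi_inj[OF S(1)]] S(2,3) by (simp add: card_cartesian_product)
  moreover have "spanning (v + 1) ?S'" using construction_spanning[OF S(1) \<open>S \<noteq> {}\<close> S(4)] by simp
  moreover have "divisible (v + 1) (r + 1) ?S'" using construction_divisible[OF S(1,2,3,5)] by simp
  ultimately have "cylinder (v + 1) (r + 1) (mset_set ?S')" using assms(3) unfolding gcc_def by blast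
  then have "cylinder (Suc v) (Suc r) (mset_set ?S')" by simp
  then show "cylinder v r (mset_set S)" using reduction[OF S(1,2,3)] by blast
qed
end
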